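(* Let $\mathcal{F}$ be a hypothesis class of functions $\mathcal{X}\to\{\pm1\}$, $\mathcal{P}$ a distribution on $\mathcal{X}\times\{\pm1\}$, and $G\subseteq\mathcal{F}$. If a true risk minimizer $f^*$ of $\mathcal{P}$ (i.e. a minimizer of $R_{\mathcal{P}}$ over $\mathcal{F}$) belongs to $G$, then $f^*$ is also a true risk minimizer under the distribution $\mathcal{P}(G)$, i.e. $f^*$ minimizes $R_{\mathcal{P}(G)}$ over $\mathcal{F}$.
   Context: $AGR(G)=\{x\in\mathcal{X}:f_1(x)=f_2(x)\ \forall f_1,f_2\in G\}$. $\mathcal{P}(G)$ is the distribution of $(X,Y')$ where $(X,Y)\sim\mathcal{P}$ and $Y'$ is the common value of the functions of $G$ at $X$ if $X\in AGR(G)$, and $Y'=Y$ otherwise. $R_{\mathcal{P}}(f)=\Pr_{\mathcal{P}}[f(X)\ne Y]$, $R_{\mathcal{P}(G)}(f)=\Pr_{\mathcal{P}(G)}[f(X)\ne Y']$. (In the paper $G$ is a low-error set $G_t$ produced by the Active-ILESS algorithm, which relabels examples in $AGR(G_t)$ by the unanimous value.) *)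

theory Defs
  imports "HOL-Probability.Probability"
begin

text \<open>Labels in {+1,-1} are represented by bool (True = +1, False = -1).\<close>

definition AGR :: "('x \<Rightarrow> bool) set \<Rightarrow> 'x set" where
  "AGR G = {x. \<forall>f1\<in>G. \<forall>f2\<in>G. f1 x = f2 x}"

definition relabel :: "('x \<Rightarrow> bool) set \<Rightarrow> 'x \<times> bool \<Rightarrow> 'x \<times> bool" where
  "relabel G = (\<lambda>(x, y). if x \<in> AGR G \<and> G \<noteq> {} then (x, (SOME f. f \<in> G) x) else (x, y))"

definition relabeled_dist :: "('x \<times> bool) measure \<Rightarrow> ('x \<Rightarrow> bool) set \<Rightarrow> ('x \<times> bool) measure" where
  "relabeled_dist P G = distr P P (relabel G)"

definition risk :: "('x \<times> bool) measure \<Rightarrow> ('x \<Rightarrow> bool) \<Rightarrow> real" where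
  "risk P f = measure P {z \<in> space P. f (fst z) \<noteq> snd z}"

definition is_risk_minimizer :: "('x \<times> bool) measure \<Rightarrow> ('x \<Rightarrow> bool) set \<Rightarrow> ('x \<Rightarrow> bool) \<Rightarrow> bool" where
  "is_risk_minimizer P F f \<longleftrightarrow> f \<in> F \<and> (\<forall>g\<in>F. risk P f \<le> risk P g)"

end

theory Submission
  imports Defs
begin

theorem lemma10:
  fixes Mx :: "'x measure" and P :: "('x \<times> bool) measure"
    and F G :: "('x \<Rightarrow> bool) set" and fstar :: "'x \<Rightarrow> bool"
  assumes "prob_space P"
    and "sets P = sets (Mx \<Otimes>\<^sub>M count_space UNIV)"
    and "\<And>f. f \<in> F \<Longrightarrow> f \<in> Mx \<rightarrow>\<^sub>M count_space UNIV"
    and "AGR G \<inter> space Mx \<in> sets Mx"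
    and "G \<subseteq> F"
    and "is_risk_minimizer P F fstar"
    and "fstar \<in> G"
  shows "is_risk_minimizer (relabeled_dist P G) F fstar"
proof -
  interpret prob_space P by fact
  define M where "M = Mx \<Otimes>\<^sub>M count_space (UNIV::bool set)"
  define A where "A = AGR G"
  define c where "c = (SOME f. f \<in> G)"
  have cG: "c \<in> G" unfolding c_def using assms(7) by (rule someI[where P="\<lambda>f. f \<in> G"])
  have cA: "\<And>x. x \<in> A \<Longrightarrow> c x = fstar x" using cG assms(7) unfolding A_def AGR_def by blast
  have sp: "space P = space M" using assms(2) unfolding M_def by (rule sets_eq_imp_space_eq)
  have sP: "sets P = sets M" using assms(2) unfolding M_def .
  have meas: "\<And>f. f \<in> F \<Longrightarrow> (\<lambda>z. f (fst z)) \<in> measurable M (count_space UNIV)"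
    unfolding M_def using assms(3) by measurable
  have Aset: "{z \<in> space M. fst z \<in> A} \<in> sets M"
  proof -
    have "{z \<in> space M. fst z \<in> A} = (A \<inter> space Mx) \<times> UNIV"
      unfolding M_def by (auto simp: space_pair_measure)
    also have "\<dots> \<in> sets M" unfolding M_def using assms(4) unfolding A_def by auto
    finally show ?thesis .
  qed
  have predA: "Measurable.pred M (\<lambda>z. fst z \<in> A)"
    using Aset unfolding pred_def by (simp add: Collect_conj_eq)
  have setq: "\<And>p. Measurable.pred M p \<Longrightarrow> {z \<in> space P. p z} \<in> sets P"
    using sp sP by (simp add: pred_def)
  have predne: "\<And>f g. f \<in> F \<Longrightarrow> g \<in> F \<Longrightarrow> Measurable.pred M (\<lambda>z. f (fst z) \<noteq> g (fst z))"
    using meas by measurable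
  have predy: "\<And>f. f \<in> F \<Longrightarrow> Measurable.pred M (\<lambda>z. f (fst z) \<noteq> snd z)"
  proof -
    fix f assume f: "f \<in> F"
    have "(\<lambda>z. snd z) \<in> measurable M (count_space UNIV)" unfolding M_def by measurable
    then show "Measurable.pred M (\<lambda>z. f (fst z) \<noteq> snd z)" using meas[OF f] by measurable
  qed
  have GneF: "G \<noteq> {}" using assms(7) by auto
  have rel: "relabel G = (\<lambda>z. if fst z \<in> A then (fst z, c (fst z)) else z)"
    unfolding relabel_def A_def c_def using GneF by (auto simp: fun_eq_iff split: prod.splits)
  have cF: "c \<in> F" using cG assms(5) by auto
  have rm: "relabel G \<in> measurable P P"
  proof -
    have "(\<lambda>z. if fst z \<in> A then (fst z, c (fst z)) else z) \<in> measurable M M"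
    proof (rule measurable_If)
      show "(\<lambda>z. (fst z, c (fst z))) \<in> measurable M M"
        unfolding M_def using assms(3)[OF cF] by measurable
      show "(\<lambda>z. z) \<in> measurable M M" by (simp add: id_def[symmetric])
      show "{z \<in> space M. fst z \<in> A} \<in> sets M" by (rule Aset)
    qed
    then have "relabel G \<in> measurable M M" unfolding rel .
    then show ?thesis using measurable_cong_sets[OF sP sP] by simp
  qed
  let ?Q = "relabeled_dist P G"
  have spQ: "space ?Q = space P" unfolding relabeled_dist_def by simp
  have riskQ: "risk ?Q g = measure P {z \<in> space P. (fst z \<in> A \<and> g (fst z) \<noteq> c (fst z)) \<or> (fst z \<notin> A \<and> g (fst z) \<noteq> snd z)}"
    if g: "g \<in> F" for g
  proof -
    have S: "{z \<in> space P. g (fst z) \<noteq> snd z} \<in> sets P" using setq predy[OF g] by blast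
    have "risk ?Q g = measure P (relabel G -` {z \<in> space P. g (fst z) \<noteq> snd z} \<inter> space P)"
      unfolding risk_def spQ unfolding relabeled_dist_def using measure_distr[OF rm S] by simp
    also have "relabel G -` {z \<in> space P. g (fst z) \<noteq> snd z} \<inter> space P
      = {z \<in> space P. (fst z \<in> A \<and> g (fst z) \<noteq> c (fst z)) \<or> (fst z \<notin> A \<and> g (fst z) \<noteq> snd z)}"
    proof -
      have inP: "\<And>z. z \<in> space P \<Longrightarrow> relabel G z \<in> space P"
        using rm by (rule measurable_space)
      show ?thesis
      proof (rule set_eqI, rule iffI)
        fix z assume "z \<in> relabel G -` {z \<in> space P. g (fst z) \<noteq> snd z} \<inter> space P"
        then show "z \<in> {z \<in> space P. (fst z \<in> A \<and> g (fst z) \<noteq> c (fst z)) \<or> (fst z \<notin> A \<and> g (fst z) \<noteq> snd z)}"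
          by (cases "fst z \<in> A") (simp_all add: rel)
      next
        fix z assume z: "z \<in> {z \<in> space P. (fst z \<in> A \<and> g (fst z) \<noteq> c (fst z)) \<or> (fst z \<notin> A \<and> g (fst z) \<noteq> snd z)}"
        then have zs: "z \<in> space P" by simp
        have "relabel G z \<in> space P" using inP[OF zs] .
        moreover have "g (fst (relabel G z)) \<noteq> snd (relabel G z)"
          using z by (cases "fst z \<in> A") (simp_all add: rel)
        ultimately show "z \<in> relabel G -` {z \<in> space P. g (fst z) \<noteq> snd z} \<inter> space P"
          using zs by simp
      qed
    qed
    finally show ?thesis .
  qed
  have fF: "fstar \<in> F" using assms(6) unfolding is_risk_minimizer_def by auto
  show ?thesis unfolding is_risk_minimizer_def
  proof (intro conjI ballI fF)
    fix g assume g: "g \<in> F"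
    define EfQ where "EfQ = {z \<in> space P. fst z \<notin> A \<and> fstar (fst z) \<noteq> snd z}"
    define D1 where "D1 = {z \<in> space P. fst z \<in> A \<and> fstar (fst z) \<noteq> snd z}"
    define EgQ where "EgQ = {z \<in> space P. (fst z \<in> A \<and> g (fst z) \<noteq> c (fst z)) \<or> (fst z \<notin> A \<and> g (fst z) \<noteq> snd z)}"
    define EfP where "EfP = {z \<in> space P. fstar (fst z) \<noteq> snd z}"
    define EgP where "EgP = {z \<in> space P. g (fst z) \<noteq> snd z}"
    have mEfQ: "EfQ \<in> sets P" unfolding EfQ_def apply (rule setq) using predA predy[OF fF] by measurable
    have mD1: "D1 \<in> sets P" unfolding D1_def apply (rule setq) using predA predy[OF fF] by measurable
    have mEgQ: "EgQ \<in> sets P" unfolding EgQ_def apply (rule setq) using predA predy[OF g] predne[OF g cF] by measurable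
    have rQf: "risk ?Q fstar = measure P EfQ"
      unfolding riskQ[OF fF] EfQ_def using cA by (intro arg_cong[where f="measure P"]) auto
    have rQg: "risk ?Q g = measure P EgQ" unfolding riskQ[OF g] EgQ_def ..
    have "measure P EfP = measure P (EfQ \<union> D1)"
      unfolding EfP_def EfQ_def D1_def by (intro arg_cong[where f="measure P"]) auto
    also have "\<dots> = measure P EfQ + measure P D1"
      using mEfQ mD1 by (intro finite_measure_Union) (auto simp: EfQ_def D1_def)
    finally have e1: "measure P EfP = measure P EfQ + measure P D1" .
    have "measure P EfP \<le> measure P EgP"
      using assms(6) g unfolding is_risk_minimizer_def risk_def EfP_def EgP_def by auto
    also have "measure P EgP \<le> measure P (EgQ \<union> D1)"
      using mEgQ mD1 unfolding EgP_def EgQ_def D1_def using cA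
      by (intro finite_measure_mono) auto
    also have "\<dots> \<le> measure P EgQ + measure P D1"
      using mEgQ mD1 by (rule measure_Un_le)
    finally show "risk ?Q fstar \<le> risk ?Q g" using e1 rQf rQg by linarith
  qed
qed

end
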